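(* With the notation below, let $D=D_+-D_-\in\mathrm{Div}(C_p)$ with $D_\pm$ effective, and let $(h_i,\mu_i)$, $(h'_j,\mu'_j)$ be finite families in $H_p^+\times\mathbb{R}_+^*$ with $D_+=\sum_i\delta(h_i,\mu_i)$ and $D_-=\sum_j\delta(h'_j,\mu'_j)$. Assume $\deg(D)=0$ and that $h\in H_p$ satisfies $(p-1)h=\sum_ih_i-\sum_jh'_j$. Then the function $f(\lambda)=\sum_i\Theta_{h_i,\mu_i}(\lambda)-\sum_j\Theta_{h'_j,\mu'_j}(\lambda)-h\lambda$ is continuous, piecewise affine with slopes in $H_p$, satisfies $f(p\lambda)=f(\lambda)$ for all $\lambda\in\mathbb{R}_+^*$, and its principal divisor is $(f)=D$.
   Context: Let $p$ be a prime, $H_p=\mathbb{Z}[1/p]$, $H_p^+=H_p\cap(0,\infty)$. $C_p$ is the set of subgroups $H=\lambda H_p\subset\mathbb{R}$, $\lambda>0$. A divisor $D$ on $C_p$ assigns $D(H)\in H$ to each $H\in C_p$, zero for all but finitely many $H$; divisors form the group $\mathrm{Div}(C_p)$; $D$ is effective if $D(H)\geq0$ for all $H$; $\deg(D)=\sum_HD(H)$. For $h\in H_p^+$, $\mu>0$, $\delta(h,\mu)$ is the divisor supported at $\mu h^{-1}H_p$ with value $\mu$ there. For a continuous piecewise affine $f$ on $(0,\infty)$ with slopes in $H_p$ and $f(p\lambda)=f(\lambda)$, the order at $H=\lambda H_p$ is $\mathrm{Ord}_H(f)=h_+-h_-$, $h_\pm=\lim_{\epsilon\to0\pm}(f((1+\epsilon)\lambda)-f(\lambda))/\epsilon$,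 and $(f)(H)=\mathrm{Ord}_H(f)$. Let $\theta(\lambda)=\sum_{m\geq0}\max(0,1-p^m\lambda)+\sum_{m\geq1}\max(0,p^{-m}\lambda-1)$ and $\Theta_{h,\mu}(\lambda)=\mu\,\theta(\mu^{-1}h\lambda)$. *)

theory Defs
  imports "HOL-Analysis.Analysis"
begin

definition Hp :: "nat \<Rightarrow> real set" where
  "Hp p = {x. \<exists>(k::int) (n::nat). x = real_of_int k / real p ^ n}"

definition Hp_pos :: "nat \<Rightarrow> real set" where
  "Hp_pos p = Hp p \<inter> {0<..}"

definition scaledHp :: "nat \<Rightarrow> real \<Rightarrow> real set" where
  "scaledHp p c = (\<lambda>x. c * x) ` Hp p"

definition Cp :: "nat \<Rightarrow> real set set" where
  "Cp p = {scaledHp p c | c. c > 0}"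

text \<open>Divisors on C_p are modelled as functions real set => real, zero outside C_p.\<close>
definition is_divisor :: "nat \<Rightarrow> (real set \<Rightarrow> real) \<Rightarrow> bool" where
  "is_divisor p D \<longleftrightarrow> (\<forall>H. D H \<noteq> 0 \<longrightarrow> H \<in> Cp p) \<and> (\<forall>H \<in> Cp p. D H \<in> H)
     \<and> finite {H. D H \<noteq> 0}"

definition effective :: "(real set \<Rightarrow> real) \<Rightarrow> bool" where
  "effective D \<longleftrightarrow> (\<forall>H. D H \<ge> 0)"

definition deg :: "(real set \<Rightarrow> real) \<Rightarrow> real" where
  "deg D = sum D {H. D H \<noteq> 0}"

definition delta_div :: "nat \<Rightarrow> real \<Rightarrow> real \<Rightarrow> real set \<Rightarrow> real" where
  "delta_div p h \<mu> H = (if H = scaledHp p (\<mu> / h) then \<mu> else 0)"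

definition piecewise_affine_Hp :: "nat \<Rightarrow> (real \<Rightarrow> real) \<Rightarrow> bool" where
  "piecewise_affine_Hp p f \<longleftrightarrow> continuous_on {0<..} f \<and>
     (\<forall>a b. 0 < a \<longrightarrow> a < b \<longrightarrow>
       (\<exists>xs::real list. xs \<noteq> [] \<and> sorted xs \<and> hd xs = a \<and> last xs = b \<and>
          (\<forall>k. Suc k < length xs \<longrightarrow>
             (\<exists>s \<in> Hp p. \<exists>c. \<forall>x \<in> {xs ! k .. xs ! Suc k}. f x = s * x + c))))"

text \<open>Ord at the point lambda: h_+ - h_-.\<close>
definition ord_at :: "(real \<Rightarrow> real) \<Rightarrow> real \<Rightarrow> real" where
  "ord_at f l =
     Lim (at_right 0) (\<lambda>e. (f ((1 + e) * l) - f l) / e)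
   - Lim (at_left 0) (\<lambda>e. (f ((1 + e) * l) - f l) / e)"

definition principal_div :: "nat \<Rightarrow> (real \<Rightarrow> real) \<Rightarrow> real set \<Rightarrow> real" where
  "principal_div p f H =
     (if H \<in> Cp p then ord_at f (SOME l. l > 0 \<and> H = scaledHp p l) else 0)"

definition theta :: "nat \<Rightarrow> real \<Rightarrow> real" where
  "theta p l = (\<Sum>m. max 0 (1 - real p ^ m * l))
             + (\<Sum>m. max 0 (l / real p ^ Suc m - 1))"

definition Theta :: "nat \<Rightarrow> real \<Rightarrow> real \<Rightarrow> real \<Rightarrow> real" where
  "Theta p h \<mu> l = \<mu> * theta p (h * l / \<mu>)"

end

theory Submission
  imports Defs "HOL-Computational_Algebra.Primes"
begin


lemma Hp_add: assumes "p > 0" "x \<in> Hp p" "y \<in> Hp p" shows "x + y \<in> Hp p"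
proof -
  obtain a n where x: "x = real_of_int a / real p ^ n" using assms(2) unfolding Hp_def by auto
  obtain b m where y: "y = real_of_int b / real p ^ m" using assms(3) unfolding Hp_def by auto
  have "x + y = real_of_int (a * int p ^ m + b * int p ^ n) / real p ^ (n + m)"
    using assms(1) by (simp add: x y field_simps power_add)
  then show ?thesis unfolding Hp_def by blast
qed

lemma Hp_mult: assumes "p > 0" "x \<in> Hp p" "y \<in> Hp p" shows "x * y \<in> Hp p"
proof -
  obtain a n where x: "x = real_of_int a / real p ^ n" using assms(2) unfolding Hp_def by auto
  obtain b m where y: "y = real_of_int b / real p ^ m" using assms(3) unfolding Hp_def by auto
  have "x * y = real_of_int (a * b) / real p ^ (n + m)"
    using assms(1) by (simp add: x y field_simps power_add)
  then show ?thesis unfolding Hp_def by blast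
qed

lemma Hp_uminus: assumes "x \<in> Hp p" shows "- x \<in> Hp p"
proof -
  obtain a n where x: "x = real_of_int a / real p ^ n" using assms(1) unfolding Hp_def by auto
  have "-x = real_of_int (-a) / real p ^ n" by (simp add: x)
  then show ?thesis unfolding Hp_def by blast
qed

lemma Hp_diff: assumes "p > 0" "x \<in> Hp p" "y \<in> Hp p" shows "x - y \<in> Hp p"
  using Hp_add[OF assms(1,2) Hp_uminus[OF assms(3)]] by simp

lemma Hp_int: "real_of_int k \<in> Hp p"
  unfolding Hp_def by (rule CollectI, rule exI[of _ k], rule exI[of _ 0]) simp

lemma Hp_0: "0 \<in> Hp p" using Hp_int[of 0 p] by simp
lemma Hp_1: "1 \<in> Hp p" using Hp_int[of 1 p] by simp

lemma Hp_pow: "real p ^ n \<in> Hp p"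
  using Hp_int[of "int p ^ n" p] by simp

lemma Hp_pow_inv: "1 / real p ^ n \<in> Hp p"
  unfolding Hp_def by (rule CollectI, rule exI[of _ 1], rule exI[of _ n]) simp

lemma Hp_powi: "real p powi k \<in> Hp p"
proof (cases "k \<ge> 0")
  case True
  then have "real p powi k = real p ^ nat k" by (metis nonneg_int_cases power_int_of_nat nat_int)
  then show ?thesis using Hp_pow by simp
next
  case False
  then have "real p powi k = 1 / real p ^ nat (-k)"
    by (metis (no_types, lifting) add.inverse_inverse divide_inverse_commute inverse_eq_divide
        linorder_le_cases nat_0_le power_int_minus power_int_of_nat mult_1 neg_0_le_iff_le)
  then show ?thesis using Hp_pow_inv by simp
qed

lemma Hp_sum: assumes "p > 0" "\<And>x. x \<in> A \<Longrightarrow> g x \<in> Hp p" shows "sum g A \<in> Hp p"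
  using assms(2)
proof (induction A rule: infinite_finite_induct)
  case (infinite A) then show ?case using Hp_0 by simp
next
  case empty then show ?case using Hp_0 by simp
next
  case (insert x F) then show ?case using Hp_add[OF assms(1)] by simp
qed



lemma scaled_mult_unit:
  assumes "p > 0"
  shows "scaledHp p (c * real p powi k) = scaledHp p c"
proof -
  let ?u = "real p powi k"
  have u0: "?u \<noteq> 0" using assms by simp
  have "(\<lambda>x. ?u * x) ` Hp p = Hp p"
  proof
    show "(\<lambda>x. ?u * x) ` Hp p \<subseteq> Hp p" using Hp_mult[OF assms] Hp_powi by auto
    show "Hp p \<subseteq> (\<lambda>x. ?u * x) ` Hp p"
    proof
      fix x assume x: "x \<in> Hp p"
      have "real p powi (-k) * x \<in> Hp p" using Hp_mult[OF assms Hp_powi x] .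
      moreover have "x = ?u * (real p powi (-k) * x)" using u0 by (simp add: power_int_minus)
      ultimately show "x \<in> (\<lambda>x. ?u * x) ` Hp p" by blast
    qed
  qed
  moreover have "scaledHp p (c * ?u) = (\<lambda>x. c * x) ` ((\<lambda>x. ?u * x) ` Hp p)"
    unfolding scaledHp_def image_image by (simp add: mult.assoc)
  ultimately show ?thesis unfolding scaledHp_def by simp
qed

lemma scaled_eq_iff:
  assumes p: "prime p" and c: "c > 0" and l: "l > 0"
  shows "scaledHp p l = scaledHp p c \<longleftrightarrow> (\<exists>k::int. l = c * real p powi k)"
proof
  assume "\<exists>k::int. l = c * real p powi k"
  then show "scaledHp p l = scaledHp p c" using scaled_mult_unit prime_gt_0_nat[OF p] by auto
next
  assume eq: "scaledHp p l = scaledHp p c"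
  have p0: "p > 0" using prime_gt_0_nat[OF p] .
  have "l \<in> scaledHp p l" unfolding scaledHp_def using Hp_1 by force
  then have "l \<in> scaledHp p c" using eq by simp
  then obtain u where u: "u \<in> Hp p" "l = c * u" unfolding scaledHp_def by auto
  have "c \<in> scaledHp p c" unfolding scaledHp_def using Hp_1 by force
  then have "c \<in> scaledHp p l" using eq by simp
  then obtain v where v: "v \<in> Hp p" "c = l * v" unfolding scaledHp_def by auto
  have uv: "u * v = 1" using u(2) v(2) c by (metis mult.assoc mult_cancel_left1 less_irrefl)
  have upos: "u > 0" using u(2) c l by (metis zero_less_mult_pos)
  have vpos: "v > 0" using uv upos by (metis zero_less_mult_pos zero_less_one)
  obtain a n where a: "u = real_of_int a / real p ^ n" using u(1) unfolding Hp_def by auto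
  obtain b m where b: "v = real_of_int b / real p ^ m" using v(1) unfolding Hp_def by auto
  have apos: "a > 0" using upos p0 by (simp add: a zero_less_divide_iff)
  have bpos: "b > 0" using vpos p0 by (simp add: b zero_less_divide_iff)
  have "real_of_int (a * b) = real_of_int (int (p ^ (n + m)))"
    using uv p0 by (simp add: a b field_simps power_add)
  then have "a * b = int (p ^ (n + m))" by linarith
  then have "nat a * nat b = p ^ (n + m)" using apos bpos by (metis nat_int nat_mult_distrib less_imp_le)
  then have "nat a dvd p ^ (n + m)" by (metis dvd_triv_left)
  then obtain i where i: "nat a = p ^ i" using divides_primepow_nat[OF p] by auto
  have "real_of_int a = real p ^ i" using i apos by (metis of_int_of_nat_eq of_nat_power int_nat_eq less_imp_le)
  then have "u = real p powi (int i - int n)" using a p0 by (simp add: power_int_diff)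
  then show "\<exists>k::int. l = c * real p powi k" using u(2) by blast
qed



lemma theta_finite:
  assumes p: "real p > 1" and N1: "1 \<le> real p ^ N * x" and N2: "x \<le> real p ^ N"
  shows "theta p x = (\<Sum>m<N. max 0 (1 - real p ^ m * x)) + (\<Sum>m<N. max 0 (x / real p ^ Suc m - 1))"
proof -
  have x0: "x > 0"
  proof (rule ccontr)
    assume "\<not> x > 0"
    then have "real p ^ N * x \<le> 0" using p by (simp add: mult_nonneg_nonpos)
    then show False using N1 by simp
  qed
  have s1: "(\<Sum>m. max 0 (1 - real p ^ m * x)) = (\<Sum>m<N. max 0 (1 - real p ^ m * x))"
  proof (rule suminf_finite)
    fix m assume "m \<notin> {..<N}"
    then have "N \<le> m" by simp
    then have "real p ^ N \<le> real p ^ m" using p by (intro power_increasing) auto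
    then have "real p ^ N * x \<le> real p ^ m * x" using x0 by (simp add: mult_right_mono)
    then show "max 0 (1 - real p ^ m * x) = 0" using N1 by linarith
  qed simp
  have s2: "(\<Sum>m. max 0 (x / real p ^ Suc m - 1)) = (\<Sum>m<N. max 0 (x / real p ^ Suc m - 1))"
  proof (rule suminf_finite)
    fix m assume "m \<notin> {..<N}"
    then have "N \<le> Suc m" by simp
    then have "real p ^ N \<le> real p ^ Suc m" using p by (intro power_increasing) auto
    then have "x \<le> real p ^ Suc m" using N2 by linarith
    then have "x / real p ^ Suc m \<le> 1" using p by (simp add: divide_le_eq)
    then show "max 0 (x / real p ^ Suc m - 1) = 0" by simp
  qed simp
  show ?thesis unfolding theta_def s1 s2 ..
qed

lemma max0_mult: "c > 0 \<Longrightarrow> c * max 0 t = max 0 (c * t)" for c t :: real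
  by (auto simp: max_def zero_le_mult_iff)

lemma Theta_finite:
  assumes p: "real p > 1" and h: "h > 0" and mu: "\<mu> > 0"
    and N1: "\<mu> \<le> real p ^ N * h * x" and N2: "h * x \<le> \<mu> * real p ^ N"
  shows "Theta p h \<mu> x = (\<Sum>m<N. max 0 (\<mu> - real p ^ m * h * x))
                        + (\<Sum>m<N. max 0 (h / real p ^ Suc m * x - \<mu>))"
proof -
  have "1 \<le> real p ^ N * (h * x / \<mu>)" using N1 mu by (simp add: field_simps)
  moreover have "h * x / \<mu> \<le> real p ^ N" using N2 mu by (simp add: field_simps)
  ultimately have th: "theta p (h * x / \<mu>) = (\<Sum>m<N. max 0 (1 - real p ^ m * (h * x / \<mu>)))
      + (\<Sum>m<N. max 0 (h * x / \<mu> / real p ^ Suc m - 1))"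
    using theta_finite[OF p] by blast
  have a: "\<mu> * max 0 (1 - real p ^ m * (h * x / \<mu>)) = max 0 (\<mu> - real p ^ m * h * x)" for m
  proof -
    have "\<mu> * (1 - real p ^ m * (h * x / \<mu>)) = \<mu> - real p ^ m * h * x" using mu by (simp add: field_simps)
    then show ?thesis by (simp only: max0_mult[OF mu])
  qed
  have b: "\<mu> * max 0 (h * x / \<mu> / real p ^ Suc m - 1) = max 0 (h / real p ^ Suc m * x - \<mu>)" for m
  proof -
    have "\<mu> * (h * x / \<mu> / real p ^ Suc m - 1) = h / real p ^ Suc m * x - \<mu>" using mu p by (simp add: field_simps)
    then show ?thesis by (simp only: max0_mult[OF mu])
  qed
  show ?thesis unfolding Theta_def th distrib_left sum_distrib_left a b ..
qed

lemma theta_mult_p: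
  assumes p: "real p > 1" and x: "x > 0"
  shows "theta p (real p * x) = theta p x + x - 1"
proof -
  obtain N where N: "max (1/x) x < real p ^ N" using real_arch_pow[OF p] by blast
  have pN: "real p ^ N > 0" using p by simp
  let ?f = "\<lambda>m. max 0 (1 - real p ^ m * x)"
  let ?g = "\<lambda>m. max 0 (real p * x / real p ^ Suc m - 1)"
  have sf: "summable ?f"
  proof (rule summable_finite[of "{..<N}"])
    fix m assume "m \<notin> {..<N}"
    then have "real p ^ N \<le> real p ^ m" using p by (intro power_increasing) auto
    moreover have "1 < real p ^ N * x" using N x by (simp add: field_simps)
    ultimately have "real p ^ N * x \<le> real p ^ m * x" using x by (simp add: mult_right_mono)
    with \<open>1 < real p ^ N * x\<close> show "?f m = 0" by linarith
  qed simp
  have sg: "summable ?g"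
  proof (rule summable_finite[of "{..<N}"])
    fix m assume "m \<notin> {..<N}"
    then have "real p ^ N \<le> real p ^ m" using p by (intro power_increasing) auto
    then have "x \<le> real p ^ m" using N by linarith
    then have "real p * x \<le> real p ^ Suc m" using p by simp
    then show "?g m = 0" using p by (simp add: divide_le_eq)
  qed simp
  have e1: "(\<Sum>m. max 0 (1 - real p ^ m * (real p * x))) = (\<Sum>m. ?f m) - max 0 (1 - x)"
  proof -
    have "(\<Sum>m. ?f (Suc m)) = (\<Sum>m. ?f m) - ?f 0" using suminf_split_head[OF sf] .
    moreover have "?f (Suc m) = max 0 (1 - real p ^ m * (real p * x))" for m
      by (simp only: power_Suc2 mult.assoc)
    moreover have "?f 0 = max 0 (1 - x)" by simp
    ultimately show ?thesis by simp
  qed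
  have e2: "(\<Sum>m. max 0 (real p * x / real p ^ Suc m - 1)) = max 0 (x - 1) + (\<Sum>m. max 0 (x / real p ^ Suc m - 1))"
  proof -
    have "(\<Sum>m. ?g (Suc m)) = (\<Sum>m. ?g m) - ?g 0" using suminf_split_head[OF sg] .
    moreover have "?g (Suc m) = max 0 (x / real p ^ Suc m - 1)" for m using p by simp
    moreover have "?g 0 = max 0 (x - 1)" using p by simp
    ultimately show ?thesis by simp
  qed
  have "max 0 (x - 1) - max 0 (1 - x) = x - 1" by (simp add: max_def)
  then show ?thesis unfolding theta_def e1 e2 by linarith
qed


lemma Theta_mult_p:
  assumes p: "real p > 1" and pos: "h * l / \<mu> > 0" and mu: "\<mu> \<noteq> 0"
  shows "Theta p h \<mu> (real p * l) = Theta p h \<mu> l + h * l - \<mu>"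
proof -
  have e: "h * (real p * l) / \<mu> = real p * (h * l / \<mu>)" by simp
  have "Theta p h \<mu> (real p * l) = \<mu> * theta p (real p * (h * l / \<mu>))"
    unfolding Theta_def e ..
  also have "\<dots> = \<mu> * (theta p (h * l / \<mu>) + h * l / \<mu> - 1)" using theta_mult_p[OF p pos] by simp
  also have "\<dots> = \<mu> * theta p (h * l / \<mu>) + h * l - \<mu>" using mu by (simp add: right_diff_distrib distrib_left)
  also have "\<dots> = Theta p h \<mu> l + h * l - \<mu>" unfolding Theta_def ..
  finally show ?thesis .
qed


lemma ev_right_pos: "eventually (\<lambda>e::real. e > 0) (at_right 0)"
  unfolding eventually_at_filter by simp
lemma ev_left_neg: "eventually (\<lambda>e::real. e < 0) (at_left 0)"
  unfolding eventually_at_filter by simp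

lemma quot_eq: "x0 \<noteq> 0 \<Longrightarrow> x0 * ((F ((1 + e) * x0) - F x0) / ((1 + e) * x0 - x0)) = (F ((1 + e) * x0) - F x0) / e"
  for x0 e :: real
proof -
  assume x0: "x0 \<noteq> 0"
  have "(1 + e) * x0 - x0 = e * x0" by (simp add: algebra_simps)
  then show ?thesis using x0 by (cases "e = 0") (simp_all add: field_simps)
qed

lemma quot_right:
  fixes F :: "real \<Rightarrow> real"
  assumes x0: "x0 > 0" and d: "(F has_field_derivative D) (at x0 within {x0..})"
  shows "((\<lambda>e. (F ((1 + e) * x0) - F x0) / e) \<longlongrightarrow> x0 * D) (at_right 0)"
proof -
  have 1: "((\<lambda>y. (F y - F x0) / (y - x0)) \<longlongrightarrow> D) (at x0 within {x0..})"
    using d has_field_derivative_iff by blast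
  have 2: "filterlim (\<lambda>e. (1 + e) * x0) (at x0 within {x0..}) (at_right 0)"
  proof (rule filterlim_at_withinI)
    have "((\<lambda>e. (1 + e) * x0) \<longlongrightarrow> (1 + 0) * x0) (at_right 0)"
      by (intro tendsto_intros)
    then show "((\<lambda>e. (1 + e) * x0) \<longlongrightarrow> x0) (at_right 0)" by simp
    show "\<forall>\<^sub>F e in at_right 0. (1 + e) * x0 \<in> {x0..} - {x0}"
      using ev_right_pos by eventually_elim (use x0 in auto)
  qed
  have "((\<lambda>e. (F ((1 + e) * x0) - F x0) / ((1 + e) * x0 - x0)) \<longlongrightarrow> D) (at_right 0)"
    using filterlim_compose[OF 1 2] .
  then have "((\<lambda>e. x0 * ((F ((1 + e) * x0) - F x0) / ((1 + e) * x0 - x0))) \<longlongrightarrow> x0 * D) (at_right 0)"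
    by (rule tendsto_mult_left)
  then show ?thesis using quot_eq[of x0 F] x0 by simp
qed

lemma quot_left:
  fixes F :: "real \<Rightarrow> real"
  assumes x0: "x0 > 0" and d: "(F has_field_derivative D) (at x0 within {..x0})"
  shows "((\<lambda>e. (F ((1 + e) * x0) - F x0) / e) \<longlongrightarrow> x0 * D) (at_left 0)"
proof -
  have 1: "((\<lambda>y. (F y - F x0) / (y - x0)) \<longlongrightarrow> D) (at x0 within {..x0})"
    using d has_field_derivative_iff by blast
  have 2: "filterlim (\<lambda>e. (1 + e) * x0) (at x0 within {..x0}) (at_left 0)"
  proof (rule filterlim_at_withinI)
    have "((\<lambda>e. (1 + e) * x0) \<longlongrightarrow> (1 + 0) * x0) (at_left 0)"
      by (intro tendsto_intros)
    then show "((\<lambda>e. (1 + e) * x0) \<longlongrightarrow> x0) (at_left 0)" by simp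
    show "\<forall>\<^sub>F e in at_left 0. (1 + e) * x0 \<in> {..x0} - {x0}"
      using ev_left_neg by eventually_elim (use x0 in auto)
  qed
  have "((\<lambda>e. (F ((1 + e) * x0) - F x0) / ((1 + e) * x0 - x0)) \<longlongrightarrow> D) (at_left 0)"
    using filterlim_compose[OF 1 2] .
  then have "((\<lambda>e. x0 * ((F ((1 + e) * x0) - F x0) / ((1 + e) * x0 - x0))) \<longlongrightarrow> x0 * D) (at_left 0)"
    by (rule tendsto_mult_left)
  then show ?thesis using quot_eq[of x0 F] x0 by simp
qed

lemma ord_at_deriv:
  fixes F :: "real \<Rightarrow> real"
  assumes x0: "x0 > 0" and "(F has_field_derivative R) (at x0 within {x0..})"
    and "(F has_field_derivative L) (at x0 within {..x0})"
  shows "ord_at F x0 = x0 * (R - L)"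
  unfolding ord_at_def
  using tendsto_Lim[OF trivial_limit_at_right_real quot_right[OF assms(1,2)]]
    tendsto_Lim[OF trivial_limit_at_left_real quot_left[OF assms(1,3)]]
  by (simp add: right_diff_distrib)



lemma hinge_sign_near:
  fixes \<alpha> \<beta> x0 :: real
  assumes u0: "\<alpha> * x0 + \<beta> \<noteq> 0"
  obtains d where "d > 0" "\<And>x. dist x x0 < d \<Longrightarrow> \<bar>(\<alpha> * x + \<beta>) - (\<alpha> * x0 + \<beta>)\<bar> < \<bar>\<alpha> * x0 + \<beta>\<bar>"
proof (cases "\<alpha> = 0")
  case True
  show ?thesis by (rule that[of 1]) (use True u0 in auto)
next
  case False
  let ?d = "\<bar>\<alpha> * x0 + \<beta>\<bar> / \<bar>\<alpha>\<bar>"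
  show ?thesis
  proof (rule that[of ?d])
    show "?d > 0" using False u0 by simp
    fix x assume "dist x x0 < ?d"
    then have "\<bar>x - x0\<bar> * \<bar>\<alpha>\<bar> < \<bar>\<alpha> * x0 + \<beta>\<bar>" using False by (simp add: dist_real_def pos_less_divide_eq)
    moreover have "(\<alpha> * x + \<beta>) - (\<alpha> * x0 + \<beta>) = \<alpha> * (x - x0)" by (simp add: algebra_simps)
    ultimately show "\<bar>(\<alpha> * x + \<beta>) - (\<alpha> * x0 + \<beta>)\<bar> < \<bar>\<alpha> * x0 + \<beta>\<bar>" by (simp add: abs_mult mult.commute)
  qed
qed

lemma hinge_nz:
  fixes \<alpha> \<beta> x0 :: real
  assumes u0: "\<alpha> * x0 + \<beta> \<noteq> 0" and S: "x0 \<in> S"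
  shows "((\<lambda>x. max 0 (\<alpha> * x + \<beta>)) has_field_derivative (if \<alpha> * x0 + \<beta> > 0 then \<alpha> else 0)) (at x0 within S)"
proof -
  obtain d where d: "d > 0" "\<And>x. dist x x0 < d \<Longrightarrow> \<bar>(\<alpha> * x + \<beta>) - (\<alpha> * x0 + \<beta>)\<bar> < \<bar>\<alpha> * x0 + \<beta>\<bar>"
    using hinge_sign_near[OF u0] by blast
  show ?thesis
  proof (cases "\<alpha> * x0 + \<beta> > 0")
    case True
    have "((\<lambda>x. \<alpha> * x + \<beta>) has_field_derivative \<alpha>) (at x0 within S)"
      by (auto intro!: derivative_eq_intros)
    then have "((\<lambda>x. max 0 (\<alpha> * x + \<beta>)) has_field_derivative \<alpha>) (at x0 within S)"
    proof (rule has_field_derivative_transform_within[OF _ d(1) S])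
      fix x assume "x \<in> S" "dist x x0 < d"
      then have "\<bar>(\<alpha> * x + \<beta>) - (\<alpha> * x0 + \<beta>)\<bar> < \<bar>\<alpha> * x0 + \<beta>\<bar>" using d(2) by blast
      then show "\<alpha> * x + \<beta> = max 0 (\<alpha> * x + \<beta>)" using True by (auto simp: abs_if max_def split: if_splits)
    qed
    then show ?thesis using True by simp
  next
    case False
    then have neg: "\<alpha> * x0 + \<beta> < 0" using u0 by simp
    have "((\<lambda>x. 0) has_field_derivative 0) (at x0 within S)"
      by (auto intro!: derivative_eq_intros)
    then have "((\<lambda>x. max 0 (\<alpha> * x + \<beta>)) has_field_derivative 0) (at x0 within S)"
    proof (rule has_field_derivative_transform_within[OF _ d(1) S])
      fix x assume "x \<in> S" "dist x x0 < d"
      then have "\<bar>(\<alpha> * x + \<beta>) - (\<alpha> * x0 + \<beta>)\<bar> < \<bar>\<alpha> * x0 + \<beta>\<bar>" using d(2) by blast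
      then show "0 = max 0 (\<alpha> * x + \<beta>)" using neg by (auto simp: abs_if max_def split: if_splits)
    qed
    then show ?thesis using False by simp
  qed
qed

definition hR :: "real \<Rightarrow> real \<Rightarrow> real \<Rightarrow> real" where
  "hR \<alpha> \<beta> x0 = (if \<alpha> * x0 + \<beta> > 0 \<or> (\<alpha> * x0 + \<beta> = 0 \<and> \<alpha> > 0) then \<alpha> else 0)"
definition hL :: "real \<Rightarrow> real \<Rightarrow> real \<Rightarrow> real" where
  "hL \<alpha> \<beta> x0 = (if \<alpha> * x0 + \<beta> > 0 \<or> (\<alpha> * x0 + \<beta> = 0 \<and> \<alpha> < 0) then \<alpha> else 0)"

lemma hR_minus_hL: "hR \<alpha> \<beta> x0 - hL \<alpha> \<beta> x0 = (if \<alpha> * x0 + \<beta> = 0 then \<bar>\<alpha>\<bar> else 0)"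
  unfolding hR_def hL_def by auto

lemma hinge_right:
  fixes \<alpha> \<beta> x0 :: real
  shows "((\<lambda>x. max 0 (\<alpha> * x + \<beta>)) has_field_derivative hR \<alpha> \<beta> x0) (at x0 within {x0..})"
proof (cases "\<alpha> * x0 + \<beta> = 0")
  case False
  then show ?thesis using hinge_nz[OF False, of "{x0..}"] unfolding hR_def by (auto split: if_splits)
next
  case True
  have eq: "\<alpha> * x + \<beta> = \<alpha> * (x - x0)" for x using True by (simp add: algebra_simps)
  show ?thesis
  proof (cases "\<alpha> > 0")
    case pos: True
    have "((\<lambda>x. \<alpha> * x + \<beta>) has_field_derivative \<alpha>) (at x0 within {x0..})"
      by (auto intro!: derivative_eq_intros)
    then have "((\<lambda>x. max 0 (\<alpha> * x + \<beta>)) has_field_derivative \<alpha>) (at x0 within {x0..})"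
    proof (rule has_field_derivative_transform_within[of _ _ _ _ 1])
      fix x assume "x \<in> {x0..}"
      then show "\<alpha> * x + \<beta> = max 0 (\<alpha> * x + \<beta>)" using pos unfolding eq by simp
    qed auto
    then show ?thesis using pos True unfolding hR_def by simp
  next
    case npos: False
    have "((\<lambda>x. 0) has_field_derivative 0) (at x0 within {x0..})"
      by (auto intro!: derivative_eq_intros)
    then have "((\<lambda>x. max 0 (\<alpha> * x + \<beta>)) has_field_derivative 0) (at x0 within {x0..})"
    proof (rule has_field_derivative_transform_within[of _ _ _ _ 1])
      fix x assume "x \<in> {x0..}"
      then show "0 = max 0 (\<alpha> * x + \<beta>)" using npos unfolding eq by (simp add: mult_nonpos_nonneg)
    qed auto
    then show ?thesis using npos True unfolding hR_def by simp
  qed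
qed

lemma hinge_left:
  fixes \<alpha> \<beta> x0 :: real
  shows "((\<lambda>x. max 0 (\<alpha> * x + \<beta>)) has_field_derivative hL \<alpha> \<beta> x0) (at x0 within {..x0})"
proof (cases "\<alpha> * x0 + \<beta> = 0")
  case False
  then show ?thesis using hinge_nz[OF False, of "{..x0}"] unfolding hL_def by (auto split: if_splits)
next
  case True
  have eq: "\<alpha> * x + \<beta> = \<alpha> * (x - x0)" for x using True by (simp add: algebra_simps)
  show ?thesis
  proof (cases "\<alpha> < 0")
    case neg: True
    have "((\<lambda>x. \<alpha> * x + \<beta>) has_field_derivative \<alpha>) (at x0 within {..x0})"
      by (auto intro!: derivative_eq_intros)
    then have "((\<lambda>x. max 0 (\<alpha> * x + \<beta>)) has_field_derivative \<alpha>) (at x0 within {..x0})"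
    proof (rule has_field_derivative_transform_within[of _ _ _ _ 1])
      fix x assume "x \<in> {..x0}"
      then show "\<alpha> * x + \<beta> = max 0 (\<alpha> * x + \<beta>)" using neg unfolding eq by (simp add: mult_nonpos_nonpos)
    qed auto
    then show ?thesis using neg True unfolding hL_def by simp
  next
    case nneg: False
    have "((\<lambda>x. 0) has_field_derivative 0) (at x0 within {..x0})"
      by (auto intro!: derivative_eq_intros)
    then have "((\<lambda>x. max 0 (\<alpha> * x + \<beta>)) has_field_derivative 0) (at x0 within {..x0})"
    proof (rule has_field_derivative_transform_within[of _ _ _ _ 1])
      fix x assume "x \<in> {..x0}"
      then show "0 = max 0 (\<alpha> * x + \<beta>)" using nneg unfolding eq by (simp add: mult_nonneg_nonpos)
    qed auto
    then show ?thesis using nneg True unfolding hL_def by simp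
  qed
qed



lemma sum_hinge_deriv:
  fixes c \<alpha> \<beta> :: "'q \<Rightarrow> real"
  assumes "\<And>q. q \<in> Q \<Longrightarrow> ((\<lambda>x. max 0 (\<alpha> q * x + \<beta> q)) has_field_derivative H q) (at x0 within S)"
  shows "((\<lambda>x. (\<Sum>q\<in>Q. c q * max 0 (\<alpha> q * x + \<beta> q)) + s * x + t) has_field_derivative
           (\<Sum>q\<in>Q. c q * H q) + s) (at x0 within S)"
proof -
  have "((\<lambda>x. \<Sum>q\<in>Q. c q * max 0 (\<alpha> q * x + \<beta> q)) has_field_derivative (\<Sum>q\<in>Q. c q * H q)) (at x0 within S)"
    by (rule DERIV_sum, rule DERIV_cmult, rule assms)
  moreover have "((\<lambda>x. s * x) has_field_derivative s) (at x0 within S)"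
    by (auto intro!: derivative_eq_intros)
  moreover have "((\<lambda>x. t) has_field_derivative 0) (at x0 within S)" by simp
  ultimately have "((\<lambda>x. (\<Sum>q\<in>Q. c q * max 0 (\<alpha> q * x + \<beta> q)) + s * x + t) has_field_derivative
           (\<Sum>q\<in>Q. c q * H q) + s + 0) (at x0 within S)"
    by (intro DERIV_add)
  then show ?thesis by simp
qed

lemma ord_local:
  fixes F :: "real \<Rightarrow> real" and c \<alpha> \<beta> :: "'q \<Rightarrow> real"
  assumes x0: "x0 > 0" and d: "d > 0"
    and rep: "\<And>x. dist x x0 < d \<Longrightarrow> F x = (\<Sum>q\<in>Q. c q * max 0 (\<alpha> q * x + \<beta> q)) + s * x + t"
  shows "ord_at F x0 = x0 * (\<Sum>q\<in>Q. c q * (if \<alpha> q * x0 + \<beta> q = 0 then \<bar>\<alpha> q\<bar> else 0))"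
proof -
  let ?G = "\<lambda>x. (\<Sum>q\<in>Q. c q * max 0 (\<alpha> q * x + \<beta> q)) + s * x + t"
  have R: "(F has_field_derivative (\<Sum>q\<in>Q. c q * hR (\<alpha> q) (\<beta> q) x0) + s) (at x0 within {x0..})"
    using sum_hinge_deriv[of Q \<alpha> \<beta> "\<lambda>q. hR (\<alpha> q) (\<beta> q) x0" x0 "{x0..}" c s t, OF hinge_right]
    by (rule has_field_derivative_transform_within[OF _ d]) (auto simp: rep)
  have L: "(F has_field_derivative (\<Sum>q\<in>Q. c q * hL (\<alpha> q) (\<beta> q) x0) + s) (at x0 within {..x0})"
    using sum_hinge_deriv[of Q \<alpha> \<beta> "\<lambda>q. hL (\<alpha> q) (\<beta> q) x0" x0 "{..x0}" c s t, OF hinge_left]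
    by (rule has_field_derivative_transform_within[OF _ d]) (auto simp: rep)
  have "ord_at F x0 = x0 * (((\<Sum>q\<in>Q. c q * hR (\<alpha> q) (\<beta> q) x0) + s) - ((\<Sum>q\<in>Q. c q * hL (\<alpha> q) (\<beta> q) x0) + s))"
    using ord_at_deriv[OF x0 R L] .
  also have "\<dots> = x0 * (\<Sum>q\<in>Q. c q * (hR (\<alpha> q) (\<beta> q) x0 - hL (\<alpha> q) (\<beta> q) x0))"
    by (simp add: sum_subtractf right_diff_distrib)
  finally show ?thesis by (simp add: hR_minus_hL)
qed



lemma hinge_const_sign:
  fixes \<alpha> \<beta> lo hi x :: real
  assumes lohi: "lo < hi" and x: "lo \<le> x" "x \<le> hi"
    and noroot: "\<alpha> \<noteq> 0 \<Longrightarrow> \<not> (lo < - \<beta> / \<alpha> \<and> - \<beta> / \<alpha> < hi)"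
  shows "max 0 (\<alpha> * x + \<beta>) = (if \<alpha> * ((lo + hi) / 2) + \<beta> \<ge> 0 then \<alpha> * x + \<beta> else 0)"
proof (cases "\<alpha> = 0")
  case True then show ?thesis by simp
next
  case False
  define r where "r = - \<beta> / \<alpha>"
  define m where "m = (lo + hi) / 2"
  have ex: "\<alpha> * y + \<beta> = \<alpha> * (y - r)" for y using False by (simp add: r_def field_simps)
  have "r \<le> lo \<or> hi \<le> r" using noroot[OF False] unfolding r_def by linarith
  then show ?thesis
  proof
    assume r: "r \<le> lo"
    have 1: "x - r \<ge> 0" using r x by linarith
    have 2: "m - r > 0" using r lohi unfolding m_def by (simp add: field_simps)
    show ?thesis unfolding m_def[symmetric] ex using False 1 2
      by (cases "\<alpha> > 0") (auto simp: max_def zero_le_mult_iff mult_le_0_iff)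
  next
    assume r: "hi \<le> r"
    have 1: "x - r \<le> 0" using r x by linarith
    have 2: "m - r < 0" using r lohi unfolding m_def by (simp add: field_simps)
    show ?thesis unfolding m_def[symmetric] ex using False 1 2
      by (cases "\<alpha> > 0") (auto simp: max_def zero_le_mult_iff mult_le_0_iff)
  qed
qed

lemma pa_local:
  fixes F :: "real \<Rightarrow> real" and c \<alpha> \<beta> :: "'q \<Rightarrow> real"
  assumes p: "p > 0" and Q: "finite Q" and ab: "a < b"
    and rep: "\<And>x. a \<le> x \<Longrightarrow> x \<le> b \<Longrightarrow> F x = (\<Sum>q\<in>Q. c q * max 0 (\<alpha> q * x + \<beta> q)) + s * x + t"
    and sl: "\<And>q. q \<in> Q \<Longrightarrow> c q * \<alpha> q \<in> Hp p" and s: "s \<in> Hp p"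
  shows "\<exists>xs::real list. xs \<noteq> [] \<and> sorted xs \<and> hd xs = a \<and> last xs = b \<and>
          (\<forall>k. Suc k < length xs \<longrightarrow>
             (\<exists>sl \<in> Hp p. \<exists>C. \<forall>x \<in> {xs ! k .. xs ! Suc k}. F x = sl * x + C))"
proof -
  define K where "K = {a, b} \<union> ((\<lambda>q. - \<beta> q / \<alpha> q) ` {q\<in>Q. \<alpha> q \<noteq> 0} \<inter> {a<..<b})"
  have Kfin: "finite K" unfolding K_def using Q by auto
  have Kab: "\<And>y. y \<in> K \<Longrightarrow> a \<le> y \<and> y \<le> b" unfolding K_def using ab by auto
  define xs where "xs = sorted_list_of_set K"
  have setxs: "set xs = K" unfolding xs_def using Kfin by simp
  have sorted: "sorted xs" unfolding xs_def by simp
  have strict: "sorted_wrt (<) xs" unfolding xs_def using strict_sorted_list_of_set by blast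
  have ne: "xs \<noteq> []" using setxs unfolding K_def by auto
  have len: "length xs > 0" using ne by simp
  have hd: "hd xs = a"
  proof -
    have "hd xs \<in> K" using ne setxs by (metis hd_in_set)
    then have "a \<le> hd xs" using Kab by blast
    moreover have "a \<in> set xs" using setxs unfolding K_def by auto
    then obtain j where "j < length xs" "xs ! j = a" by (metis in_set_conv_nth)
    then have "hd xs \<le> a" using sorted_nth_mono[OF sorted, of 0 j] ne by (simp add: hd_conv_nth)
    ultimately show ?thesis by simp
  qed
  have last: "last xs = b"
  proof -
    have "last xs \<in> K" using ne setxs by (metis last_in_set)
    then have "last xs \<le> b" using Kab by blast
    moreover have "b \<in> set xs" using setxs unfolding K_def by auto
    then obtain j where "j < length xs" "xs ! j = b" by (metis in_set_conv_nth)
    then have "b \<le> last xs" using sorted_nth_mono[OF sorted, of j "length xs - 1"] ne by (simp add: last_conv_nth)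
    ultimately show ?thesis by simp
  qed
  have pieces: "\<exists>sl \<in> Hp p. \<exists>C. \<forall>x \<in> {xs ! k .. xs ! Suc k}. F x = sl * x + C" if k: "Suc k < length xs" for k
  proof -
    let ?lo = "xs ! k" and ?hi = "xs ! Suc k"
    let ?m = "(?lo + ?hi) / 2"
    have lohi: "?lo < ?hi" using sorted_wrt_nth_less[OF strict, of k "Suc k"] k by simp
    have loK: "?lo \<in> K" using k setxs by (metis Suc_lessD nth_mem)
    have hiK: "?hi \<in> K" using k setxs by (metis nth_mem)
    have noroot: "\<not> (?lo < - \<beta> q / \<alpha> q \<and> - \<beta> q / \<alpha> q < ?hi)" if q: "q \<in> Q" "\<alpha> q \<noteq> 0" for q
    proof
      assume r: "?lo < - \<beta> q / \<alpha> q \<and> - \<beta> q / \<alpha> q < ?hi"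
      have "a \<le> ?lo" "?hi \<le> b" using Kab loK hiK by auto
      then have "- \<beta> q / \<alpha> q \<in> K" unfolding K_def using q r by auto
      then obtain j where j: "j < length xs" "xs ! j = - \<beta> q / \<alpha> q" using setxs by (metis in_set_conv_nth)
      show False
      proof (cases "j \<le> k")
        case True
        then have "xs ! j \<le> ?lo" using sorted_nth_mono[OF sorted, of j k] k by simp
        then show False using r j by simp
      next
        case False
        then have "?hi \<le> xs ! j" using sorted_nth_mono[OF sorted, of "Suc k" j] j by simp
        then show False using r j by simp
      qed
    qed
    define P where "P q = (\<alpha> q * ?m + \<beta> q \<ge> 0)" for q
    define sl where "sl = s + (\<Sum>q\<in>Q. if P q then c q * \<alpha> q else 0)"
    define C where "C = t + (\<Sum>q\<in>Q. if P q then c q * \<beta> q else 0)"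
    have "sl \<in> Hp p" unfolding sl_def
      by (intro Hp_add[OF p s] Hp_sum[OF p]) (use sl Hp_0 in auto)
    moreover have "\<forall>x \<in> {?lo .. ?hi}. F x = sl * x + C"
    proof
      fix x assume x: "x \<in> {?lo .. ?hi}"
      have "a \<le> ?lo" "?hi \<le> b" using Kab loK hiK by auto
      then have Fx: "F x = (\<Sum>q\<in>Q. c q * max 0 (\<alpha> q * x + \<beta> q)) + s * x + t" using rep x by auto
      have "c q * max 0 (\<alpha> q * x + \<beta> q) = (if P q then c q * \<alpha> q else 0) * x + (if P q then c q * \<beta> q else 0)"
        if q: "q \<in> Q" for q
        using hinge_const_sign[OF lohi, of x "\<alpha> q" "\<beta> q"] x noroot[OF q] unfolding P_def
        by (auto simp: algebra_simps)
      then have "(\<Sum>q\<in>Q. c q * max 0 (\<alpha> q * x + \<beta> q)) = (\<Sum>q\<in>Q. (if P q then c q * \<alpha> q else 0) * x + (if P q then c q * \<beta> q else 0))"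
        by (rule sum.cong[OF refl])
      also have "\<dots> = (\<Sum>q\<in>Q. if P q then c q * \<alpha> q else 0) * x + (\<Sum>q\<in>Q. if P q then c q * \<beta> q else 0)"
        by (simp add: sum.distrib sum_distrib_right)
      finally show "F x = sl * x + C" unfolding Fx sl_def C_def by (simp add: algebra_simps)
    qed
    ultimately show ?thesis by blast
  qed
  show ?thesis using ne sorted hd last pieces by blast
qed

lemma cont_local:
  fixes F :: "real \<Rightarrow> real" and c \<alpha> \<beta> :: "'q \<Rightarrow> real"
  assumes d: "d > 0"
    and rep: "\<And>x. dist x x0 < d \<Longrightarrow> F x = (\<Sum>q\<in>Q. c q * max 0 (\<alpha> q * x + \<beta> q)) + s * x + t"
  shows "isCont F x0"
proof -
  have "eventually (\<lambda>x. F x = (\<Sum>q\<in>Q. c q * max 0 (\<alpha> q * x + \<beta> q)) + s * x + t) (nhds x0)"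
    unfolding eventually_nhds_metric using d rep by blast
  note ev = this
  have "isCont (\<lambda>x. (\<Sum>q\<in>Q. c q * max 0 (\<alpha> q * x + \<beta> q)) + s * x + t) x0"
    by (intro continuous_intros)
  then show ?thesis using isCont_cong[OF ev] by simp
qed



lemma count_pow:
  fixes x :: real
  assumes p: "real p > 1" and x: "x > 0" and N1: "1 < real p ^ N * x" and N2: "x < real p ^ N"
  shows "(\<Sum>m<N. (if real p ^ m * x = 1 then 1 else 0) + (if x = real p ^ Suc m then 1 else 0))
         = (if \<exists>k::int. x = real p powi k then 1 else (0::real))"
proof (cases "\<exists>k::int. x = real p powi k")
  case True
  then obtain k :: int where k: "x = real p powi k" by blast
  show ?thesis
  proof (cases "k \<le> 0")
    case True
    define m0 where "m0 = nat (-k)"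
    have xm0: "x = 1 / real p ^ m0" unfolding k m0_def using True
      by (metis add.inverse_inverse inverse_eq_divide nat_0_le neg_0_le_iff_le power_int_minus power_int_of_nat)
    have pm0: "real p ^ m0 * x = 1" using xm0 p by simp
    have x1: "x \<le> 1" using xm0 p by (simp add: divide_le_eq)
    have c1: "real p ^ m * x = 1 \<longleftrightarrow> m = m0" for m
    proof
      assume "real p ^ m * x = 1"
      then have "real p ^ m = real p ^ m0" using pm0 x by (metis mult_right_cancel less_irrefl)
      then show "m = m0" using p power_inject_exp by blast
    qed (use pm0 in simp)
    have c2: "x \<noteq> real p ^ Suc m" for m
    proof -
      have "1 < real p ^ Suc m" by (rule one_less_power[OF p]) simp
      then show ?thesis using x1 by linarith
    qed
    have "real p ^ m0 < real p ^ N" using pm0 N1 x by (metis mult_less_cancel_right_pos)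
    then have m0N: "m0 < N" using p power_less_imp_less_exp by blast
    have "(\<Sum>m<N. (if real p ^ m * x = 1 then 1 else 0) + (if x = real p ^ Suc m then 1 else 0))
        = (\<Sum>m<N. if m = m0 then 1 else (0::real))" using c1 c2 by (intro sum.cong) auto
    also have "\<dots> = 1" using m0N by simp
    finally show ?thesis using k by auto
  next
    case False
    define m0 where "m0 = nat k - 1"
    have xm0: "x = real p ^ Suc m0" unfolding k m0_def using False
      by (metis Suc_pred' int_nat_eq less_le_not_le linorder_le_less_linear nat_0_le of_nat_0_less_iff power_int_of_nat zero_less_nat_eq)
    have x1: "x > 1" unfolding xm0 by (rule one_less_power[OF p]) simp
    have c2: "x = real p ^ Suc m \<longleftrightarrow> m = m0" for m
    proof
      assume "x = real p ^ Suc m"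
      then have "real p ^ Suc m = real p ^ Suc m0" using xm0 by (simp only:)
      then show "m = m0" using p power_inject_exp by (metis Suc_inject)
    next
      assume "m = m0"
      then show "x = real p ^ Suc m" using xm0 by (simp only:)
    qed
    have c1: "real p ^ m * x \<noteq> 1" for m
    proof -
      have "1 \<le> real p ^ m" using p by (simp add: one_le_power)
      then have "x \<le> real p ^ m * x" using x by (simp add: mult_le_cancel_right1)
      then show ?thesis using x1 by linarith
    qed
    have "real p ^ Suc m0 < real p ^ N" using xm0 N2 by simp
    then have m0N: "Suc m0 < N" using p power_less_imp_less_exp by blast
    have "(\<Sum>m<N. (if real p ^ m * x = 1 then 1 else 0) + (if x = real p ^ Suc m then 1 else 0))
        = (\<Sum>m<N. if m = m0 then 1 else (0::real))" using c1 c2 by (intro sum.cong) auto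
    also have "\<dots> = 1" using m0N by simp
    finally show ?thesis using k by auto
  qed
next
  case False
  have c1: "real p ^ m * x \<noteq> 1" for m
  proof
    assume "real p ^ m * x = 1"
    then have "x = real p powi (- int m)" using p by (simp add: power_int_minus field_simps)
    then show False using False by blast
  qed
  have c2: "x \<noteq> real p ^ Suc m" for m
  proof
    assume "x = real p ^ Suc m"
    then have "x = real p powi (int (Suc m))" by (simp only: power_int_of_nat)
    then show False using False by blast
  qed
  show ?thesis using c1 c2 False by simp
qed



definition alphaQ :: "nat \<Rightarrow> real \<Rightarrow> nat \<times> bool \<Rightarrow> real" where
  "alphaQ p h mb = (if snd mb then - (real p ^ fst mb * h) else h / real p ^ Suc (fst mb))"
definition betaQ :: "real \<Rightarrow> nat \<times> bool \<Rightarrow> real" where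
  "betaQ \<mu> mb = (if snd mb then \<mu> else - \<mu>)"

lemma sum_pairs_bool: "(\<Sum>mb\<in>A \<times> (UNIV::bool set). g mb) = (\<Sum>m\<in>A. g (m, True) + g (m, False))"
  using sum.cartesian_product[where g="\<lambda>m b. g (m, b)" and A=A and B=UNIV] by (simp add: UNIV_bool add.commute)

lemma Theta_Q:
  assumes p: "real p > 1" and h: "h > 0" and mu: "\<mu> > 0"
    and N1: "\<mu> \<le> real p ^ N * h * x" and N2: "h * x \<le> \<mu> * real p ^ N"
  shows "Theta p h \<mu> x = (\<Sum>mb\<in>{..<N} \<times> (UNIV::bool set). max 0 (alphaQ p h mb * x + betaQ \<mu> mb))"
proof -
  have "Theta p h \<mu> x = (\<Sum>m<N. max 0 (\<mu> - real p ^ m * h * x)) + (\<Sum>m<N. max 0 (h / real p ^ Suc m * x - \<mu>))"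
    using Theta_finite[OF p h mu N1 N2] .
  also have "\<dots> = (\<Sum>m<N. max 0 (alphaQ p h (m, True) * x + betaQ \<mu> (m, True))
                        + max 0 (alphaQ p h (m, False) * x + betaQ \<mu> (m, False)))"
    unfolding sum.distrib[symmetric] alphaQ_def betaQ_def by (intro sum.cong) (auto simp: algebra_simps)
  also have "\<dots> = (\<Sum>mb\<in>{..<N} \<times> (UNIV::bool set). max 0 (alphaQ p h mb * x + betaQ \<mu> mb))"
    by (rule sum_pairs_bool[symmetric])
  finally show ?thesis .
qed

lemma ord_Q:
  assumes pr: "prime p" and h: "h > 0" and mu: "\<mu> > 0" and l: "l > 0"
    and N1: "\<mu> < real p ^ N * h * l" and N2: "h * l < \<mu> * real p ^ N"
  shows "l * (\<Sum>mb\<in>{..<N} \<times> (UNIV::bool set).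
            (if alphaQ p h mb * l + betaQ \<mu> mb = 0 then \<bar>alphaQ p h mb\<bar> else 0))
         = (if scaledHp p l = scaledHp p (\<mu> / h) then \<mu> else 0)"
proof -
  have p: "real p > 1" using prime_gt_1_nat[OF pr] by simp
  have p0: "p > 0" using prime_gt_0_nat[OF pr] .
  define x where "x = h * l / \<mu>"
  have x0: "x > 0" unfolding x_def using h l mu by simp
  have xN1: "1 < real p ^ N * x" unfolding x_def using N1 mu by (simp add: field_simps)
  have xN2: "x < real p ^ N" unfolding x_def using N2 mu by (simp add: field_simps)
  have t1: "l * (if alphaQ p h (m, True) * l + betaQ \<mu> (m, True) = 0 then \<bar>alphaQ p h (m, True)\<bar> else 0)
      = \<mu> * (if real p ^ m * x = 1 then 1 else 0)" for m
  proof -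
    have e: "alphaQ p h (m, True) * l + betaQ \<mu> (m, True) = 0 \<longleftrightarrow> real p ^ m * x = 1"
      unfolding alphaQ_def betaQ_def x_def using mu by (auto simp: field_simps)
    have a: "\<bar>alphaQ p h (m, True)\<bar> = real p ^ m * h" unfolding alphaQ_def using h p by simp
    show ?thesis unfolding e a using mu by (auto simp: x_def field_simps)
  qed
  have t2: "l * (if alphaQ p h (m, False) * l + betaQ \<mu> (m, False) = 0 then \<bar>alphaQ p h (m, False)\<bar> else 0)
      = \<mu> * (if x = real p ^ Suc m then 1 else 0)" for m
  proof -
    have pm: "real p ^ Suc m > 0" using p by simp
    have e: "alphaQ p h (m, False) * l + betaQ \<mu> (m, False) = 0 \<longleftrightarrow> x = real p ^ Suc m"
      unfolding alphaQ_def betaQ_def x_def using mu pm p0 by (auto simp: field_simps)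
    have a: "\<bar>alphaQ p h (m, False)\<bar> = h / real p ^ Suc m" unfolding alphaQ_def using h pm by simp
    show ?thesis unfolding e a using mu pm p0 by (auto simp: x_def field_simps)
  qed
  have "l * (\<Sum>mb\<in>{..<N} \<times> (UNIV::bool set).
            (if alphaQ p h mb * l + betaQ \<mu> mb = 0 then \<bar>alphaQ p h mb\<bar> else 0))
       = \<mu> * (\<Sum>m<N. (if real p ^ m * x = 1 then 1 else 0) + (if x = real p ^ Suc m then 1 else 0))"
    unfolding sum_pairs_bool sum_distrib_left distrib_left t1 t2 ..
  also have "\<dots> = \<mu> * (if \<exists>k::int. x = real p powi k then 1 else 0)"
    using count_pow[OF p x0 xN1 xN2] by simp
  also have "(\<exists>k::int. x = real p powi k) \<longleftrightarrow> scaledHp p l = scaledHp p (\<mu> / h)"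
  proof -
    have "(\<exists>k::int. x = real p powi k) \<longleftrightarrow> (\<exists>k::int. l = \<mu> / h * real p powi k)"
      unfolding x_def using h mu by (auto simp: field_simps)
    also have "\<dots> \<longleftrightarrow> scaledHp p l = scaledHp p (\<mu> / h)"
      using scaled_eq_iff[OF pr _ l, of "\<mu> / h"] h mu by simp
    finally show ?thesis .
  qed
  finally show ?thesis by simp
qed



lemma sum_E:
  fixes g :: "'i + 'j \<Rightarrow> real"
  assumes "finite I" "finite J"
  shows "(\<Sum>e\<in>Inl ` I \<union> Inr ` J. g e) = (\<Sum>i\<in>I. g (Inl i)) + (\<Sum>j\<in>J. g (Inr j))"
  using assms by (subst sum.union_disjoint) (auto simp: sum.reindex)

lemma alphaQ_Hp: assumes p: "p > 0" and h: "h \<in> Hp p" shows "alphaQ p h mb \<in> Hp p"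
proof (cases "snd mb")
  case True
  then show ?thesis unfolding alphaQ_def using Hp_uminus[OF Hp_mult[OF p Hp_pow h]] by simp
next
  case False
  have "h * (1 / real p ^ Suc (fst mb)) \<in> Hp p" using Hp_mult[OF p h Hp_pow_inv] .
  then have "h / real p ^ Suc (fst mb) \<in> Hp p" by (simp only: times_divide_eq_right mult_1_right)
  then show ?thesis unfolding alphaQ_def using False by (simp only: if_False)
qed



theorem proposition5p11:
  fixes p :: nat and I :: "'i set" and J :: "'j set"
    and hs :: "'i \<Rightarrow> real" and mus :: "'i \<Rightarrow> real"
    and hs' :: "'j \<Rightarrow> real" and mus' :: "'j \<Rightarrow> real"
    and h :: real and D Dplus Dminus :: "real set \<Rightarrow> real"
  assumes "prime p"
    and "finite I" and "finite J"
    and "\<forall>i \<in> I. hs i \<in> Hp_pos p \<and> mus i > 0"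
    and "\<forall>j \<in> J. hs' j \<in> Hp_pos p \<and> mus' j > 0"
    and "Dplus = (\<lambda>H. \<Sum>i \<in> I. delta_div p (hs i) (mus i) H)"
    and "Dminus = (\<lambda>H. \<Sum>j \<in> J. delta_div p (hs' j) (mus' j) H)"
    and "D = (\<lambda>H. Dplus H - Dminus H)"
    and "is_divisor p D" and "effective Dplus" and "effective Dminus"
    and "deg D = 0"
    and "h \<in> Hp p"
    and "(real p - 1) * h = (\<Sum>i \<in> I. hs i) - (\<Sum>j \<in> J. hs' j)"
  shows "let f = (\<lambda>l. (\<Sum>i \<in> I. Theta p (hs i) (mus i) l)
                     - (\<Sum>j \<in> J. Theta p (hs' j) (mus' j) l) - h * l)
         in piecewise_affine_Hp p f
            \<and> (\<forall>l > 0. f (real p * l) = f l)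
            \<and> principal_div p f = D"
proof -
  note pr = assms(1)
  have p1: "real p > 1" using prime_gt_1_nat[OF pr] by simp
  have p0: "p > 0" using prime_gt_0_nat[OF pr] .
  define E where "E = Inl ` I \<union> Inr ` J"
  define hh where "hh = case_sum hs hs'"
  define mm where "mm = case_sum mus mus'"
  define cc :: "'i + 'j \<Rightarrow> real" where "cc = case_sum (\<lambda>_. 1) (\<lambda>_. -1)"
  have Efin: "finite E" unfolding E_def using assms(2,3) by simp
  have hpos: "hh e > 0 \<and> mm e > 0 \<and> hh e \<in> Hp p" if "e \<in> E" for e
    using that assms(4,5) unfolding E_def hh_def mm_def Hp_pos_def by auto
  have ccHp: "cc e \<in> Hp p" for e
    unfolding cc_def using Hp_1 Hp_uminus[OF Hp_1] by (cases e) auto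
  have sumE: "(\<Sum>e\<in>E. g e) = (\<Sum>i\<in>I. g (Inl i)) + (\<Sum>j\<in>J. g (Inr j))" for g :: "'i + 'j \<Rightarrow> real"
    unfolding E_def using sum_E[OF assms(2,3)] .
  define f where "f = (\<lambda>l. (\<Sum>i \<in> I. Theta p (hs i) (mus i) l)
                     - (\<Sum>j \<in> J. Theta p (hs' j) (mus' j) l) - h * l)"
  have fE: "f l = (\<Sum>e\<in>E. cc e * Theta p (hh e) (mm e) l) - h * l" for l
    unfolding f_def sumE cc_def hh_def mm_def by (simp add: sum_negf)
  define Q where "Q N = E \<times> ({..<N} \<times> (UNIV::bool set))" for N :: nat
  define \<alpha> where "\<alpha> q = alphaQ p (hh (fst q)) (snd q)" for q :: "('i + 'j) \<times> (nat \<times> bool)"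
  define \<beta> where "\<beta> q = betaQ (mm (fst q)) (snd q)" for q :: "('i + 'j) \<times> (nat \<times> bool)"
  define c where "c q = cc (fst q)" for q :: "('i + 'j) \<times> (nat \<times> bool)"
  have Qfin: "finite (Q N)" for N unfolding Q_def using Efin by (intro finite_cartesian_product) auto
  have sumQ: "(\<Sum>q\<in>Q N. c q * G (fst q) (snd q)) = (\<Sum>e\<in>E. cc e * (\<Sum>mb\<in>{..<N} \<times> (UNIV::bool set). G e mb))"
    for N and G :: "'i + 'j \<Rightarrow> nat \<times> bool \<Rightarrow> real"
    unfolding Q_def c_def sum_distrib_left
    by (subst sum.cartesian_product) (simp add: case_prod_beta')
  have rep: "\<exists>N. \<forall>x. lo \<le> x \<longrightarrow> x \<le> hi \<longrightarrow>
      f x = (\<Sum>q\<in>Q N. c q * max 0 (\<alpha> q * x + \<beta> q)) + (- h) * x + 0 \<and>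
      (\<forall>e\<in>E. mm e < real p ^ N * hh e * x \<and> hh e * x < mm e * real p ^ N)" if lo: "0 < lo" for lo hi
  proof -
    define B where "B = (\<Sum>e\<in>E. mm e / (hh e * lo) + hh e * \<bar>hi\<bar> / mm e) + 1"
    obtain N where N: "B < real p ^ N" using real_arch_pow[OF p1] by blast
    have bnd: "mm e / (hh e * lo) < real p ^ N \<and> hh e * \<bar>hi\<bar> / mm e < real p ^ N" if e: "e \<in> E" for e
    proof -
      have nn: "0 \<le> mm e / (hh e * lo) + hh e * \<bar>hi\<bar> / mm e" if e: "e \<in> E" for e
      proof -
        have a: "0 < hh e" "0 < mm e" using hpos[OF e] by auto
        have "0 \<le> mm e / (hh e * lo)" using a lo by simp
        moreover have "0 \<le> hh e * \<bar>hi\<bar> / mm e" using a by simp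
        ultimately show ?thesis by simp
      qed
      have "mm e / (hh e * lo) + hh e * \<bar>hi\<bar> / mm e \<le> (\<Sum>e\<in>E. mm e / (hh e * lo) + hh e * \<bar>hi\<bar> / mm e)"
        by (rule member_le_sum[OF e nn Efin]) auto
      moreover have "0 \<le> mm e / (hh e * lo)" "0 \<le> hh e * \<bar>hi\<bar> / mm e"
        using hpos[OF e] lo by auto
      ultimately show ?thesis using N unfolding B_def by linarith
    qed
    show ?thesis
    proof (intro exI allI impI)
      fix x assume x: "lo \<le> x" "x \<le> hi"
      have bx: "mm e < real p ^ N * hh e * x \<and> hh e * x < mm e * real p ^ N" if e: "e \<in> E" for e
      proof
        have "mm e < real p ^ N * (hh e * lo)" using bnd[OF e] hpos[OF e] lo by (simp add: divide_less_eq)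
        also have "\<dots> \<le> real p ^ N * hh e * x" using hpos[OF e] x p1 by (simp add: mult_left_mono)
        finally show "mm e < real p ^ N * hh e * x" .
        have "hh e * x \<le> hh e * \<bar>hi\<bar>" using hpos[OF e] x by (simp add: mult_left_mono)
        also have "\<dots> < mm e * real p ^ N" using bnd[OF e] hpos[OF e] by (simp add: divide_less_eq mult.commute)
        finally show "hh e * x < mm e * real p ^ N" .
      qed
      have "(\<Sum>e\<in>E. cc e * Theta p (hh e) (mm e) x)
          = (\<Sum>e\<in>E. cc e * (\<Sum>mb\<in>{..<N} \<times> (UNIV::bool set). max 0 (alphaQ p (hh e) mb * x + betaQ (mm e) mb)))"
        using Theta_Q[OF p1] hpos bx by (intro sum.cong refl) (simp add: less_imp_le)
      also have "\<dots> = (\<Sum>q\<in>Q N. c q * max 0 (\<alpha> q * x + \<beta> q))"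
        unfolding \<alpha>_def \<beta>_def by (rule sumQ[symmetric])
      finally show "f x = (\<Sum>q\<in>Q N. c q * max 0 (\<alpha> q * x + \<beta> q)) + (- h) * x + 0 \<and>
          (\<forall>e\<in>E. mm e < real p ^ N * hh e * x \<and> hh e * x < mm e * real p ^ N)"
        using bx by (simp add: fE)
    qed
  qed
  have slopes: "c q * \<alpha> q \<in> Hp p" if q: "q \<in> Q N" for q N
  proof -
    have "fst q \<in> E" using q unfolding Q_def by auto
    then show ?thesis unfolding c_def \<alpha>_def
      using Hp_mult[OF p0 ccHp alphaQ_Hp[OF p0]] hpos by blast
  qed
  have mh: "- h \<in> Hp p" using Hp_uminus[OF assms(13)] .
  have cont: "continuous_on {0<..} f"
  proof (rule continuous_at_imp_continuous_on, rule ballI)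
    fix x :: real assume "x \<in> {0<..}"
    then have x: "x > 0" by simp
    obtain N where N: "\<forall>y. x / 2 \<le> y \<longrightarrow> y \<le> 2 * x \<longrightarrow>
      f y = (\<Sum>q\<in>Q N. c q * max 0 (\<alpha> q * y + \<beta> q)) + (- h) * y + 0 \<and>
      (\<forall>e\<in>E. mm e < real p ^ N * hh e * y \<and> hh e * y < mm e * real p ^ N)"
      using rep[of "x / 2" "2 * x"] x by auto
    show "isCont f x"
    proof (rule cont_local[of "x / 2"])
      show "x / 2 > 0" using x by simp
      fix y assume "dist y x < x / 2"
      then have "x / 2 \<le> y" "y \<le> 2 * x" using x by (auto simp: dist_real_def abs_if split: if_splits)
      then show "f y = (\<Sum>q\<in>Q N. c q * max 0 (\<alpha> q * y + \<beta> q)) + (- h) * y + 0" using N by blast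
    qed
  qed
  have pieces: "\<exists>xs::real list. xs \<noteq> [] \<and> sorted xs \<and> hd xs = a \<and> last xs = b \<and>
          (\<forall>k. Suc k < length xs \<longrightarrow>
             (\<exists>s \<in> Hp p. \<exists>C. \<forall>x \<in> {xs ! k .. xs ! Suc k}. f x = s * x + C))" if ab: "0 < a" "a < b" for a b
  proof -
    obtain N where N: "\<forall>y. a \<le> y \<longrightarrow> y \<le> b \<longrightarrow>
      f y = (\<Sum>q\<in>Q N. c q * max 0 (\<alpha> q * y + \<beta> q)) + (- h) * y + 0 \<and>
      (\<forall>e\<in>E. mm e < real p ^ N * hh e * y \<and> hh e * y < mm e * real p ^ N)"
      using rep[of a b] ab by auto
    show ?thesis
      by (rule pa_local[OF p0 Qfin ab(2), where F=f and c=c and \<alpha>=\<alpha> and \<beta>=\<beta> and s="- h" and t=0]) (use N slopes mh in auto)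
  qed
  have PA: "piecewise_affine_Hp p f" unfolding piecewise_affine_Hp_def using cont pieces by blast
  have DH: "D H = (\<Sum>e\<in>E. cc e * delta_div p (hh e) (mm e) H)" for H
    unfolding sumE using assms(6,7,8) by (simp add: cc_def hh_def mm_def sum_negf)
  define S where "S = (\<lambda>e. scaledHp p (mm e / hh e)) ` E"
  have Sfin: "finite S" unfolding S_def using Efin by simp
  have supp: "{H. D H \<noteq> 0} \<subseteq> S"
  proof
    fix H assume "H \<in> {H. D H \<noteq> 0}"
    then have "D H \<noteq> 0" by simp
    then obtain e where "e \<in> E" "delta_div p (hh e) (mm e) H \<noteq> 0" unfolding DH
      by (metis (no_types, lifting) mult_zero_right sum.neutral)
    then show "H \<in> S" unfolding S_def delta_div_def by (auto split: if_splits)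
  qed
  have "deg D = (\<Sum>H\<in>S. D H)"
    unfolding deg_def by (rule sum.mono_neutral_left[OF Sfin supp]) auto
  also have "\<dots> = (\<Sum>e\<in>E. cc e * (\<Sum>H\<in>S. delta_div p (hh e) (mm e) H))"
    unfolding DH sum_distrib_left by (rule sum.swap)
  also have "\<dots> = (\<Sum>e\<in>E. cc e * mm e)"
  proof (rule sum.cong[OF refl])
    fix e assume e: "e \<in> E"
    have "(\<Sum>H\<in>S. delta_div p (hh e) (mm e) H) = mm e"
      unfolding delta_div_def using Sfin e unfolding S_def by (simp add: sum.delta)
    then show "cc e * (\<Sum>H\<in>S. delta_div p (hh e) (mm e) H) = cc e * mm e" by simp
  qed
  finally have degE: "(\<Sum>e\<in>E. cc e * mm e) = 0" using assms(12) by simp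
  have hE: "(\<Sum>e\<in>E. cc e * hh e) = (real p - 1) * h"
    unfolding sumE assms(14) by (simp add: cc_def hh_def sum_negf)
  have per: "\<forall>l > 0. f (real p * l) = f l"
  proof (intro allI impI)
    fix l :: real assume l: "l > 0"
    have te: "cc e * Theta p (hh e) (mm e) (real p * l) = cc e * Theta p (hh e) (mm e) l + l * (cc e * hh e) - cc e * mm e"
      if e: "e \<in> E" for e
    proof -
      have pos: "hh e * l / mm e > 0" using hpos[OF e] l by simp
      have ne: "mm e \<noteq> 0" using hpos[OF e] by simp
      have T: "Theta p (hh e) (mm e) (real p * l) = Theta p (hh e) (mm e) l + hh e * l - mm e"
        by (rule Theta_mult_p[OF p1 pos ne])
      show ?thesis unfolding T by (simp add: algebra_simps)
    qed
    have "f (real p * l) = (\<Sum>e\<in>E. cc e * Theta p (hh e) (mm e) l + l * (cc e * hh e) - cc e * mm e) - h * (real p * l)"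
      unfolding fE using te by simp
    also have "\<dots> = (\<Sum>e\<in>E. cc e * Theta p (hh e) (mm e) l) + l * (\<Sum>e\<in>E. cc e * hh e) - (\<Sum>e\<in>E. cc e * mm e) - h * (real p * l)"
      by (simp add: sum.distrib sum_subtractf sum_distrib_left)
    also have "\<dots> = f l" unfolding fE hE degE by (simp add: algebra_simps)
    finally show "f (real p * l) = f l" .
  qed
  have div: "principal_div p f = D"
  proof
    fix H
    show "principal_div p f H = D H"
    proof (cases "H \<in> Cp p")
      case False
      then have "D H = 0" using assms(9) unfolding is_divisor_def by blast
      then show ?thesis using False unfolding principal_div_def by simp
    next
      case True
      then have ex: "\<exists>l. l > 0 \<and> H = scaledHp p l" unfolding Cp_def by auto
      define l where "l = (SOME l. l > 0 \<and> H = scaledHp p l)"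
      have l: "l > 0" "H = scaledHp p l" using someI_ex[OF ex] unfolding l_def by auto
      obtain N where N: "\<forall>y. l / 2 \<le> y \<longrightarrow> y \<le> 2 * l \<longrightarrow>
        f y = (\<Sum>q\<in>Q N. c q * max 0 (\<alpha> q * y + \<beta> q)) + (- h) * y + 0 \<and>
        (\<forall>e\<in>E. mm e < real p ^ N * hh e * y \<and> hh e * y < mm e * real p ^ N)"
        using rep[of "l / 2" "2 * l"] l by auto
      have "ord_at f l = l * (\<Sum>q\<in>Q N. c q * (if \<alpha> q * l + \<beta> q = 0 then \<bar>\<alpha> q\<bar> else 0))"
      proof (rule ord_local[OF l(1), of "l / 2"])
        show "l / 2 > 0" using l by simp
        fix y assume "dist y l < l / 2"
        then have "l / 2 \<le> y" "y \<le> 2 * l" using l by (auto simp: dist_real_def abs_if split: if_splits)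
        then show "f y = (\<Sum>q\<in>Q N. c q * max 0 (\<alpha> q * y + \<beta> q)) + (- h) * y + 0" using N by blast
      qed
      also have "\<dots> = (\<Sum>e\<in>E. cc e * (l * (\<Sum>mb\<in>{..<N} \<times> (UNIV::bool set).
            (if alphaQ p (hh e) mb * l + betaQ (mm e) mb = 0 then \<bar>alphaQ p (hh e) mb\<bar> else 0))))"
      proof -
        have "(\<Sum>q\<in>Q N. c q * (if \<alpha> q * l + \<beta> q = 0 then \<bar>\<alpha> q\<bar> else 0))
          = (\<Sum>e\<in>E. cc e * (\<Sum>mb\<in>{..<N} \<times> (UNIV::bool set).
            (if alphaQ p (hh e) mb * l + betaQ (mm e) mb = 0 then \<bar>alphaQ p (hh e) mb\<bar> else 0)))"
          unfolding \<alpha>_def \<beta>_def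
          by (rule sumQ[where N=N and G="\<lambda>e mb. if alphaQ p (hh e) mb * l + betaQ (mm e) mb = 0 then \<bar>alphaQ p (hh e) mb\<bar> else 0"])
        then show ?thesis by (simp add: sum_distrib_left mult.left_commute)
      qed
      also have "\<dots> = (\<Sum>e\<in>E. cc e * delta_div p (hh e) (mm e) H)"
      proof (rule sum.cong[OF refl])
        fix e assume e: "e \<in> E"
        have b: "mm e < real p ^ N * hh e * l" "hh e * l < mm e * real p ^ N" using N l e by auto
        show "cc e * (l * (\<Sum>mb\<in>{..<N} \<times> (UNIV::bool set).
            (if alphaQ p (hh e) mb * l + betaQ (mm e) mb = 0 then \<bar>alphaQ p (hh e) mb\<bar> else 0)))
            = cc e * delta_div p (hh e) (mm e) H"
        proof -
          have hp: "hh e > 0" "mm e > 0" using hpos[OF e] by auto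
          show ?thesis unfolding ord_Q[OF pr hp l(1) b] using l(2) by (simp add: delta_div_def)
        qed
      qed
      also have "\<dots> = D H" using DH by simp
      finally have "ord_at f l = D H" .
      then show ?thesis using True unfolding principal_div_def l_def by simp
    qed
  qed
  show ?thesis unfolding Let_def f_def[symmetric] using PA per div by blast
qed


end
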